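(* Let $\mathcal{H}$ be a separable, infinite dimensional, complex Hilbert space, let $T_{1},T_{3}\in\mathcal{B}(\mathcal{H})$ and let $T_{2},T_{4}$ be bounded operators on a (not necessarily separable) Hilbert space $\widetilde{\mathcal{H}}$. If $T_{1}\oplus T_{2}$ is unitarily equivalent to $T_{3}\oplus T_{4}$ (as operators on $\mathcal{H}\oplus\widetilde{\mathcal{H}}$), then there is a separable closed subspace $\mathcal{M}\subset\widetilde{\mathcal{H}}$ that is reducing for both $T_{2}$ and $T_{4}$ such that $T_{1}\oplus(T_{2}|_{\mathcal{M}})$ is unitarily equivalent to $T_{3}\oplus(T_{4}|_{\mathcal{M}})$.
   Context: A closed subspace is reducing for an operator $S$ if it is invariant under both $S$ and $S^{*}$. Two operators $A\in\mathcal{B}(\mathcal{K}_1)$, $B\in\mathcal{B}(\mathcal{K}_2)$ are unitarily equivalent if $B=WAW^{*}$ for some unitary $W:\mathcal{K}_1\to\mathcal{K}_2$. *)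

theory Defs
  imports Complex_Main "HOL-Library.Countable_Set" "HOL-Library.Product_Plus"
begin

text \<open>Complex inner product spaces (the library has only real ones).
  Inner product is linear in the second argument, conjugate-linear in the first.\<close>

class complex_inner = ab_group_add +
  fixes scaleC :: "complex \<Rightarrow> 'a \<Rightarrow> 'a" (infixr "*\<^sub>C" 75)
    and cinner :: "'a \<Rightarrow> 'a \<Rightarrow> complex"
  assumes scaleC_add_right: "a *\<^sub>C (x + y) = a *\<^sub>C x + a *\<^sub>C y"
    and scaleC_add_left: "(a + b) *\<^sub>C x = a *\<^sub>C x + b *\<^sub>C x"
    and scaleC_scaleC: "a *\<^sub>C (b *\<^sub>C x) = (a * b) *\<^sub>C x"
    and scaleC_one: "1 *\<^sub>C x = x"
    and cinner_commute: "cinner x y = cnj (cinner y x)"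
    and cinner_add_right: "cinner x (y + z) = cinner x y + cinner x z"
    and cinner_scaleC_right: "cinner x (a *\<^sub>C y) = a * cinner x y"
    and cinner_self_real: "Im (cinner x x) = 0"
    and cinner_self_nonneg: "0 \<le> Re (cinner x x)"
    and cinner_self_eq_zero: "cinner x x = 0 \<longleftrightarrow> x = 0"

definition cnorm :: "'a::complex_inner \<Rightarrow> real" where
  "cnorm x = sqrt (Re (cinner x x))"

class chilbert = complex_inner +
  assumes chilbert_complete:
    "(\<forall>e>0. \<exists>N. \<forall>m\<ge>N. \<forall>n\<ge>N. sqrt (Re (cinner (X m - X n) (X m - X n))) < e)
       \<Longrightarrow> \<exists>L. (\<lambda>n. sqrt (Re (cinner (X n - L) (X n - L)))) \<longlonglongrightarrow> 0"

text \<open>Orthogonal direct sum: the product type with the sum inner product.\<close>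
instantiation prod :: (complex_inner, complex_inner) complex_inner
begin
definition scaleC_prod_def: "a *\<^sub>C x = (a *\<^sub>C fst x, a *\<^sub>C snd x)"
definition cinner_prod_def: "cinner x y = cinner (fst x) (fst y) + cinner (snd x) (snd y)"
instance
proof
  fix x y z :: "'a \<times> 'b" and a b :: complex
  show "a *\<^sub>C (x + y) = a *\<^sub>C x + a *\<^sub>C y"
    by (simp add: scaleC_prod_def scaleC_add_right prod_eq_iff fst_add snd_add)
  show "(a + b) *\<^sub>C x = a *\<^sub>C x + b *\<^sub>C x"
    by (simp add: scaleC_prod_def scaleC_add_left prod_eq_iff fst_add snd_add)
  show "a *\<^sub>C (b *\<^sub>C x) = (a * b) *\<^sub>C x"
    by (simp add: scaleC_prod_def scaleC_scaleC)
  show "1 *\<^sub>C x = x"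
    by (simp add: scaleC_prod_def scaleC_one)
  show "cinner x y = cnj (cinner y x)"
    by (simp add: cinner_prod_def cinner_commute[of "fst x"] cinner_commute[of "snd x"])
  show "cinner x (y + z) = cinner x y + cinner x z"
    by (simp add: cinner_prod_def cinner_add_right)
  show "cinner x (a *\<^sub>C y) = a * cinner x y"
    by (simp add: cinner_prod_def scaleC_prod_def cinner_scaleC_right distrib_left)
  show "Im (cinner x x) = 0"
    by (simp add: cinner_prod_def cinner_self_real)
  show "0 \<le> Re (cinner x x)"
    by (simp add: cinner_prod_def cinner_self_nonneg add_nonneg_nonneg)
  show "cinner x x = 0 \<longleftrightarrow> x = 0"
  proof
    assume h: "cinner x x = 0"
    have "Re (cinner (fst x) (fst x)) + Re (cinner (snd x) (snd x)) = 0"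
      using arg_cong[OF h, of Re] by (simp add: cinner_prod_def)
    then have "Re (cinner (fst x) (fst x)) = 0" "Re (cinner (snd x) (snd x)) = 0"
      using cinner_self_nonneg[of "fst x"] cinner_self_nonneg[of "snd x"] by linarith+
    then have "cinner (fst x) (fst x) = 0" "cinner (snd x) (snd x) = 0"
      using cinner_self_real[of "fst x"] cinner_self_real[of "snd x"] complex_eq_iff by auto
    then show "x = 0" by (simp add: cinner_self_eq_zero prod_eq_iff)
  next
    assume "x = 0" then show "cinner x x = 0"
      using cinner_self_eq_zero[of "0::'a"] cinner_self_eq_zero[of "0::'b"]
      by (simp add: cinner_prod_def)
  qed
qed
end

definition dsum_op :: "('a \<Rightarrow> 'a) \<Rightarrow> ('b \<Rightarrow> 'b) \<Rightarrow> ('a \<times> 'b \<Rightarrow> 'a \<times> 'b)" where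
  "dsum_op A B = (\<lambda>(x, y). (A x, B y))"

definition clinear :: "('a::complex_inner \<Rightarrow> 'b::complex_inner) \<Rightarrow> bool" where
  "clinear T \<longleftrightarrow> (\<forall>x y. T (x + y) = T x + T y) \<and> (\<forall>a x. T (a *\<^sub>C x) = a *\<^sub>C T x)"

definition bounded_op :: "('a::complex_inner \<Rightarrow> 'a) \<Rightarrow> bool" where
  "bounded_op T \<longleftrightarrow> clinear T \<and> (\<exists>K. \<forall>x. cnorm (T x) \<le> K * cnorm x)"

text \<open>Hilbert space adjoint (exists and is unique for bounded operators on a Hilbert space).\<close>
definition adjoint :: "('a::complex_inner \<Rightarrow> 'a) \<Rightarrow> ('a \<Rightarrow> 'a)" where
  "adjoint T = (SOME S. \<forall>x y. cinner (T x) y = cinner x (S y))"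

definition csubspace :: "'a::complex_inner set \<Rightarrow> bool" where
  "csubspace M \<longleftrightarrow> 0 \<in> M \<and> (\<forall>x\<in>M. \<forall>y\<in>M. x + y \<in> M) \<and> (\<forall>a. \<forall>x\<in>M. a *\<^sub>C x \<in> M)"

definition cclosed :: "'a::complex_inner set \<Rightarrow> bool" where
  "cclosed M \<longleftrightarrow> (\<forall>X L. (\<forall>n. X n \<in> M) \<and> (\<lambda>n. cnorm (X n - L)) \<longlonglongrightarrow> 0 \<longrightarrow> L \<in> M)"

definition closed_csubspace :: "'a::complex_inner set \<Rightarrow> bool" where
  "closed_csubspace M \<longleftrightarrow> csubspace M \<and> cclosed M"

definition cseparable :: "'a::complex_inner set \<Rightarrow> bool" where
  "cseparable M \<longleftrightarrow> (\<exists>D. countable D \<and> D \<subseteq> M \<and>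
      (\<forall>x\<in>M. \<forall>e>0. \<exists>d\<in>D. cnorm (x - d) < e))"

definition cspan :: "'a::complex_inner set \<Rightarrow> 'a set" where
  "cspan B = {(\<Sum>b\<in>F. c b *\<^sub>C b) | F c. finite F \<and> F \<subseteq> B}"

definition infinite_dimensional :: "'a::complex_inner itself \<Rightarrow> bool" where
  "infinite_dimensional _ \<longleftrightarrow> \<not> (\<exists>B::'a set. finite B \<and> cspan B = UNIV)"

definition reducing :: "'a::complex_inner set \<Rightarrow> ('a \<Rightarrow> 'a) \<Rightarrow> bool" where
  "reducing M T \<longleftrightarrow> closed_csubspace M \<and> T ` M \<subseteq> M \<and> adjoint T ` M \<subseteq> M"

definition unitarily_equiv_on ::
  "'a::complex_inner set \<Rightarrow> ('a \<Rightarrow> 'a) \<Rightarrow> 'b::complex_inner set \<Rightarrow> ('b \<Rightarrow> 'b) \<Rightarrow> bool" where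
  "unitarily_equiv_on S A S' B \<longleftrightarrow>
     (\<exists>W. bij_betw W S S'
        \<and> (\<forall>x\<in>S. \<forall>y\<in>S. W (x + y) = W x + W y)
        \<and> (\<forall>a. \<forall>x\<in>S. W (a *\<^sub>C x) = a *\<^sub>C W x)
        \<and> (\<forall>x\<in>S. \<forall>y\<in>S. cinner (W x) (W y) = cinner x y)
        \<and> (\<forall>x\<in>S. B (W x) = W (A x)))"

end

theory Submission
  imports Defs
begin


context complex_inner begin
lemma scaleC_zero_left[simp]: "0 *\<^sub>C x = 0"
proof -
  have "0 *\<^sub>C x = (0+0) *\<^sub>C x" by simp
  also have "\<dots> = 0 *\<^sub>C x + 0 *\<^sub>C x" by (rule scaleC_add_left)
  finally show ?thesis by simp
qed
lemma scaleC_zero_right[simp]: "a *\<^sub>C 0 = 0"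
proof -
  have "a *\<^sub>C 0 = a *\<^sub>C (0+0)" by simp
  also have "\<dots> = a *\<^sub>C 0 + a *\<^sub>C 0" by (rule scaleC_add_right)
  finally show ?thesis by simp
qed
lemma scaleC_minus_right: "a *\<^sub>C (- x) = - (a *\<^sub>C x)"
proof -
  have "a *\<^sub>C x + a *\<^sub>C (- x) = 0" by (simp add: scaleC_add_right[symmetric])
  then show ?thesis by (rule minus_unique[symmetric])
qed
lemma scaleC_minus_left: "(- a) *\<^sub>C x = - (a *\<^sub>C x)"
proof -
  have "a *\<^sub>C x + (- a) *\<^sub>C x = 0" by (simp add: scaleC_add_left[symmetric])
  then show ?thesis by (rule minus_unique[symmetric])
qed
lemma scaleC_diff_right: "a *\<^sub>C (x - y) = a *\<^sub>C x - a *\<^sub>C y"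
  using scaleC_add_right[of a x "- y"] by (simp add: scaleC_minus_right)
lemma scaleC_diff_left: "(a - b) *\<^sub>C x = a *\<^sub>C x - b *\<^sub>C x"
  using scaleC_add_left[of a "- b" x] by (simp add: scaleC_minus_left)
end

lemma cinner_zero_right[simp]: "cinner (x::'a::complex_inner) 0 = 0"
  using cinner_scaleC_right[of x 0 0] by simp
lemma cinner_zero_left[simp]: "cinner 0 (x::'a::complex_inner) = 0"
  by (metis cinner_commute cinner_zero_right complex_cnj_zero)
lemma cinner_add_left: "cinner (x + y) (z::'a::complex_inner) = cinner x z + cinner y z"
  by (metis cinner_add_right cinner_commute complex_cnj_add)
lemma cinner_scaleC_left: "cinner (a *\<^sub>C x) (y::'a::complex_inner) = cnj a * cinner x y"
  by (metis cinner_commute cinner_scaleC_right complex_cnj_mult)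
lemma cinner_minus_right: "cinner x (- y::'a::complex_inner) = - cinner x y"
proof -
  have "cinner x y + cinner x (- y) = 0" by (simp add: cinner_add_right[symmetric])
  then show ?thesis by (rule minus_unique[symmetric])
qed
lemma cinner_minus_left: "cinner (- x) (y::'a::complex_inner) = - cinner x y"
  by (metis cinner_commute cinner_minus_right complex_cnj_minus)
lemma cinner_diff_right: "cinner x (y - z::'a::complex_inner) = cinner x y - cinner x z"
  using cinner_add_right[of x y "- z"] by (simp add: cinner_minus_right)
lemma cinner_diff_left: "cinner (x - y) (z::'a::complex_inner) = cinner x z - cinner y z"
  using cinner_add_left[of x "- y" z] by (simp add: cinner_minus_left)
lemma cinner_self_of_real: "cinner (x::'a::complex_inner) x = complex_of_real (Re (cinner x x))"
  using cinner_self_real[of x] by (simp add: complex_eq_iff)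

lemma cnorm_ge0: "0 \<le> cnorm x" unfolding cnorm_def by (rule real_sqrt_ge_zero[OF cinner_self_nonneg])
lemma cnorm_sq: "(cnorm x)^2 = Re (cinner x x)"
  unfolding cnorm_def by (rule real_sqrt_pow2[OF cinner_self_nonneg])
lemma cnorm_zero[simp]: "cnorm 0 = 0" by (simp add: cnorm_def)
lemma cnorm_eq_0: "cnorm x = 0 \<longleftrightarrow> x = 0"
  by (metis cinner_self_eq_zero cinner_self_of_real cnorm_def of_real_0 real_sqrt_eq_zero_cancel_iff cnorm_zero)

lemma cauchy_schwarz_sq:
  fixes x y :: "'a::complex_inner"
  shows "(cmod (cinner x y))^2 \<le> Re (cinner x x) * Re (cinner y y)"
proof (cases "y = 0")
  case True then show ?thesis by simp
next
  case False
  define r where "r = Re (cinner y y)"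
  have r0: "r > 0" using False cinner_self_nonneg[of y] cinner_self_eq_zero[of y] cinner_self_of_real[of y]
    unfolding r_def by (metis less_eq_real_def of_real_0)
  define b where "b = cinner x y"
  have yx: "cinner y x = cnj b" by (simp add: b_def cinner_commute[of y x])
  define t where "t = cnj b / complex_of_real r"
  have bb: "b * cnj b = complex_of_real (cmod b) * complex_of_real (cmod b)"
    using complex_norm_square[of b] unfolding power2_eq_square of_real_mult by (rule sym)
  have bb': "cnj b * b = complex_of_real (cmod b) * complex_of_real (cmod b)"
    using bb by (simp add: mult.commute)
  have "cinner (x - t *\<^sub>C y) (x - t *\<^sub>C y) = cinner x x - t * b - cnj t * cnj b + cnj t * t * complex_of_real r"
    using cinner_self_of_real[of y]
    by (simp add: cinner_diff_left cinner_diff_right cinner_scaleC_left cinner_scaleC_right yx b_def r_def algebra_simps)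
  also have "\<dots> = cinner x x - complex_of_real ((cmod b)^2 / r)"
    using r0 by (simp add: t_def field_simps bb bb' power2_eq_square)
  finally have "Re (cinner (x - t *\<^sub>C y) (x - t *\<^sub>C y)) = Re (cinner x x) - (cmod b)^2 / r" by simp
  with cinner_self_nonneg[of "x - t *\<^sub>C y"] have "(cmod b)^2 / r \<le> Re (cinner x x)" by simp
  with r0 show ?thesis by (simp add: b_def r_def field_simps)
qed

lemma cauchy_schwarz: "cmod (cinner x y) \<le> cnorm x * cnorm y"
proof -
  have "(cmod (cinner x y))^2 \<le> (cnorm x * cnorm y)^2"
    using cauchy_schwarz_sq[of x y] by (simp add: power_mult_distrib cnorm_sq)
  then show ?thesis using cnorm_ge0[of x] cnorm_ge0[of y]
    by (meson mult_nonneg_nonneg power2_le_imp_le)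
qed

lemma nsq_add: "Re (cinner (x+y) (x+y)) = Re (cinner x x) + Re (cinner y y) + 2 * Re (cinner x y)"
proof -
  have "Re (cinner y x) = Re (cinner x y)" by (metis cinner_commute complex_cnj_cancel_iff cnj.sel(1))
  then show ?thesis by (simp add: cinner_add_left cinner_add_right)
qed

lemma cnorm_triangle: "cnorm (x + y) \<le> cnorm x + cnorm y"
proof -
  have "Re (cinner x y) \<le> cnorm x * cnorm y"
    using cauchy_schwarz[of x y] complex_Re_le_cmod[of "cinner x y"] by linarith
  then have "(cnorm (x+y))^2 \<le> (cnorm x + cnorm y)^2"
    by (simp add: cnorm_sq nsq_add power2_sum)
  then show ?thesis using cnorm_ge0[of x] cnorm_ge0[of y] by (meson add_nonneg_nonneg power2_le_imp_le)
qed

lemma cnorm_scaleC: "cnorm (a *\<^sub>C x) = cmod a * cnorm x"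
proof -
  have "Re (cinner (a *\<^sub>C x) (a *\<^sub>C x)) = (cmod a)^2 * Re (cinner x x)"
    using cinner_self_of_real[of x]
    by (simp add: cinner_scaleC_left cinner_scaleC_right mult.assoc[symmetric] complex_norm_square[symmetric])
  then show ?thesis by (simp add: cnorm_def real_sqrt_mult)
qed

lemma cnorm_minus: "cnorm (- x) = cnorm x"
  using cnorm_scaleC[of "-1" x] by (simp add: scaleC_minus_left scaleC_one)

lemma cnorm_diff_commute: "cnorm (x - y) = cnorm (y - x)"
  by (metis cnorm_minus minus_diff_eq)

lemma cnorm_triangle_diff: "cnorm (x - z) \<le> cnorm (x - y) + cnorm (y - z)"
  using cnorm_triangle[of "x - y" "y - z"] by simp



lemma parallelogram:
  "Re (cinner (a+b) (a+b)) + Re (cinner (a-b) (a-b)) = 2 * Re (cinner a a) + 2 * Re (cinner b b)"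
  by (simp add: cinner_add_left cinner_add_right cinner_diff_left cinner_diff_right)

lemma sq_le_of_cnorm_le: "cnorm x \<le> cnorm y \<Longrightarrow> Re (cinner x x) \<le> Re (cinner y y)"
  by (metis cnorm_ge0 cnorm_sq power_mono)

lemma mult_cnj_cmod: "z * cnj z = complex_of_real (cmod z) * complex_of_real (cmod z)"
  using complex_norm_square[of z] unfolding power2_eq_square of_real_mult by (rule sym)
lemma mult_cnj_cmod2: "z * (cnj z * w) = complex_of_real (cmod z) * complex_of_real (cmod z) * w"
  by (simp add: mult.assoc[symmetric] mult_cnj_cmod)

lemma riesz:
  fixes f :: "'a::chilbert \<Rightarrow> complex"
  assumes add: "\<And>x y. f (x+y) = f x + f y" and sc: "\<And>a x. f (a *\<^sub>C x) = a * f x"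
    and bd: "\<And>x. cmod (f x) \<le> C * cnorm x"
  shows "\<exists>z. \<forall>x. f x = cinner z x"
proof (cases "\<forall>x. f x = 0")
  case True then show ?thesis by (intro exI[of _ 0]) simp
next
  case False
  then obtain x0 where fx0: "f x0 \<noteq> 0" by blast
  have f0: "f 0 = 0" using sc[of 0 0] by simp
  have fdiff: "f (x - y) = f x - f y" for x y using add[of "x - y" y] by simp
  define S where "S = (\<lambda>k. cnorm (x0 - k)) ` {k. f k = 0}"
  define \<delta> where "\<delta> = Inf S"
  have Sne: "S \<noteq> {}" using f0 by (auto simp: S_def)
  have bdd: "bdd_below S" unfolding bdd_below_def S_def using cnorm_ge0 by blast
  have \<delta>le: "\<delta> \<le> cnorm (x0 - k)" if "f k = 0" for k
    unfolding \<delta>_def using that by (intro cInf_lower[OF _ bdd]) (auto simp: S_def)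
  have \<delta>0: "0 \<le> \<delta>" unfolding \<delta>_def using Sne by (intro cInf_greatest) (auto simp: S_def cnorm_ge0)
  have "\<exists>k. f k = 0 \<and> cnorm (x0 - k) < \<delta> + inverse (real (Suc n))" for n
  proof -
    have "Inf S < \<delta> + inverse (real (Suc n))" unfolding \<delta>_def by simp
    from cInf_lessD[OF Sne this] show ?thesis by (auto simp: S_def)
  qed
  then obtain kk where kk0: "\<And>n. f (kk n) = 0" and kkl: "\<And>n. cnorm (x0 - kk n) < \<delta> + inverse (real (Suc n))"
    by metis
  have par: "(cnorm (kk n - kk m))^2 \<le> 2*(\<delta> + inverse (real (Suc n)))^2 + 2*(\<delta> + inverse (real (Suc m)))^2 - 4*\<delta>^2" for n m
  proof -
    define a where "a = x0 - kk n"
    define b where "b = x0 - kk m"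
    define mid where "mid = (1/2) *\<^sub>C (kk n + kk m)"
    have fmid: "f mid = 0" using kk0 by (simp add: mid_def sc add)
    have half: "(1/2) *\<^sub>C (x0 + x0) = x0"
      by (simp add: scaleC_add_right scaleC_add_left[symmetric] scaleC_one)
    have "(1/2) *\<^sub>C (a + b) = (1/2) *\<^sub>C ((x0 + x0) - (kk n + kk m))"
      by (simp add: a_def b_def algebra_simps)
    also have "\<dots> = x0 - mid" by (simp add: scaleC_diff_right half mid_def)
    finally have "cnorm (x0 - mid) = (1/2) * cnorm (a + b)" by (metis cnorm_scaleC norm_divide norm_one norm_numeral)
    with \<delta>le[OF fmid] have "2 * \<delta> \<le> cnorm (a + b)" by simp
    then have "(2*\<delta>)^2 \<le> (cnorm (a+b))^2" using \<delta>0 by (intro power_mono) auto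
    then have 1: "4*\<delta>^2 \<le> Re (cinner (a+b) (a+b))" by (simp add: cnorm_sq power_mult_distrib)
    have "(cnorm a)^2 \<le> (\<delta> + inverse (real (Suc n)))^2"
      using kkl[of n] cnorm_ge0[of a] by (intro power_mono) (auto simp: a_def)
    then have 2: "Re (cinner a a) \<le> (\<delta> + inverse (real (Suc n)))^2" by (simp add: cnorm_sq)
    have "(cnorm b)^2 \<le> (\<delta> + inverse (real (Suc m)))^2"
      using kkl[of m] cnorm_ge0[of b] by (intro power_mono) (auto simp: b_def)
    then have 3: "Re (cinner b b) \<le> (\<delta> + inverse (real (Suc m)))^2" by (simp add: cnorm_sq)
    have "a - b = kk m - kk n" by (simp add: a_def b_def)
    then have "(cnorm (kk n - kk m))^2 = Re (cinner (a-b) (a-b))"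
      by (simp add: cnorm_sq cnorm_diff_commute[of "kk n"])
    with parallelogram[of a b] 1 2 3 show ?thesis by linarith
  qed
  have cauchy: "\<forall>e>0. \<exists>N. \<forall>m\<ge>N. \<forall>n\<ge>N. sqrt (Re (cinner (kk m - kk n) (kk m - kk n))) < e"
  proof (intro allI impI)
    fix e :: real assume e: "e > 0"
    define \<eta> where "\<eta> = min 1 (e^2 / (4*(2*\<delta>+1)))"
    have \<eta>0: "\<eta> > 0" using e \<delta>0 by (simp add: \<eta>_def)
    obtain N where N: "inverse (real (Suc N)) < \<eta>" using reals_Archimedean[OF \<eta>0] by blast
    show "\<exists>N. \<forall>m\<ge>N. \<forall>n\<ge>N. sqrt (Re (cinner (kk m - kk n) (kk m - kk n))) < e"
    proof (intro exI allI impI)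
      fix m n assume mn: "N \<le> m" "N \<le> n"
      define u where "u = inverse (real (Suc m))"
      define v where "v = inverse (real (Suc n))"
      have "u \<le> inverse (real (Suc N))" unfolding u_def by (rule le_imp_inverse_le) (use mn in auto)
      then have u: "0 < u" "u < \<eta>" using le_less_trans[OF _ N] unfolding u_def by auto
      have "v \<le> inverse (real (Suc N))" unfolding v_def by (rule le_imp_inverse_le) (use mn in auto)
      then have v: "0 < v" "v < \<eta>" using le_less_trans[OF _ N] unfolding v_def by auto
      have "\<eta> \<le> 1" by (simp add: \<eta>_def)
      have "\<eta> \<le> e^2 / (4*(2*\<delta>+1))" by (simp add: \<eta>_def)
      then have "\<eta> * (4*(2*\<delta>+1)) \<le> e^2 / (4*(2*\<delta>+1)) * (4*(2*\<delta>+1))"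
        by (rule mult_right_mono) (use \<delta>0 in auto)
      also have "\<dots> = e^2" using \<delta>0 by simp
      finally have "\<eta> * (4*(2*\<delta>+1)) \<le> e^2" .
      have "2*(\<delta> + u)^2 + 2*(\<delta> + v)^2 - 4*\<delta>^2 = (4*\<delta>+2*u)*u + (4*\<delta>+2*v)*v"
        by (simp add: power2_eq_square algebra_simps)
      also have "\<dots> \<le> (4*\<delta>+2)*u + (4*\<delta>+2)*v"
        using u v \<open>\<eta> \<le> 1\<close> \<delta>0 by (intro add_mono mult_right_mono) auto
      also have "\<dots> < (4*\<delta>+2)*\<eta> + (4*\<delta>+2)*\<eta>"
        using u v \<delta>0 by (intro add_strict_mono mult_strict_left_mono) auto
      also have "\<dots> \<le> e^2" using \<open>\<eta> * (4*(2*\<delta>+1)) \<le> e^2\<close> by (simp add: algebra_simps)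
      finally have "(cnorm (kk m - kk n))^2 < e^2" using par[of m n] unfolding u_def v_def by linarith
      then have "cnorm (kk m - kk n) < e" by (rule power2_less_imp_less) (use e in auto)
      then show "sqrt (Re (cinner (kk m - kk n) (kk m - kk n))) < e" by (simp add: cnorm_def)
    qed
  qed
  obtain L where L: "(\<lambda>n. cnorm (kk n - L)) \<longlonglongrightarrow> 0"
    using chilbert_complete[OF cauchy] unfolding cnorm_def by blast
  have fL: "f L = 0"
  proof -
    have lim: "(\<lambda>n. C * cnorm (kk n - L)) \<longlonglongrightarrow> 0" using tendsto_mult_right_zero[OF L] by simp
    have "cmod (f L) \<le> C * cnorm (kk n - L)" for n
    proof -
      have "f L = - f (kk n - L)" using kk0[of n] by (simp add: fdiff)
      then have "cmod (f L) = cmod (f (kk n - L))" by simp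
      then show ?thesis using bd by simp
    qed
    then have "cmod (f L) \<le> 0" by (intro LIMSEQ_le_const[OF lim]) auto
    then show ?thesis by simp
  qed
  define z0 where "z0 = x0 - L"
  have z0le: "cnorm z0 \<le> \<delta>"
  proof -
    have lim: "(\<lambda>n. \<delta> + inverse (real (Suc n)) + cnorm (kk n - L)) \<longlonglongrightarrow> \<delta> + 0 + 0"
      by (intro tendsto_add tendsto_const LIMSEQ_inverse_real_of_nat L)
    have "cnorm z0 \<le> \<delta> + inverse (real (Suc n)) + cnorm (kk n - L)" for n
      using cnorm_triangle_diff[of x0 L "kk n"] kkl[of n] by (simp add: z0_def)
    then show ?thesis using LIMSEQ_le_const[OF lim] by auto
  qed
  have minim: "Re (cinner z0 z0) \<le> Re (cinner (z0 - t *\<^sub>C y) (z0 - t *\<^sub>C y))" if "f y = 0" for y t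
  proof -
    have "f (L + t *\<^sub>C y) = 0" using fL that by (simp add: add sc)
    then have "\<delta> \<le> cnorm (x0 - (L + t *\<^sub>C y))" by (rule \<delta>le)
    also have "x0 - (L + t *\<^sub>C y) = z0 - t *\<^sub>C y" by (simp add: z0_def)
    finally show ?thesis using z0le by (intro sq_le_of_cnorm_le) simp
  qed
  have orth: "cinner y z0 = 0" if "f y = 0" for y
  proof -
    define c where "c = cinner y z0"
    define ny where "ny = Re (cinner y y)"
    define s where "s = 1 / (ny + 1)"
    have ny0: "ny \<ge> 0" by (simp add: ny_def cinner_self_nonneg)
    have s0: "s > 0" using ny0 by (simp add: s_def)
    have sny: "s * ny < 1" using ny0 by (simp add: s_def field_simps)
    define t where "t = complex_of_real s * c"
    have zy: "cinner z0 y = cnj c" by (simp add: c_def cinner_commute[of z0 y])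
    have "cinner (z0 - t *\<^sub>C y) (z0 - t *\<^sub>C y) = cinner z0 z0 - t * cnj c - cnj t * c + cnj t * t * complex_of_real ny"
      using cinner_self_of_real[of y]
      by (simp add: cinner_diff_left cinner_diff_right cinner_scaleC_left cinner_scaleC_right zy c_def ny_def algebra_simps)
    also have "\<dots> = cinner z0 z0 - complex_of_real (2*s*(cmod c)^2) + complex_of_real (s^2 * (cmod c)^2 * ny)"
      by (simp add: t_def power2_eq_square algebra_simps mult_cnj_cmod mult_cnj_cmod2)
    finally have "Re (cinner (z0 - t *\<^sub>C y) (z0 - t *\<^sub>C y)) = Re (cinner z0 z0) - 2*s*(cmod c)^2 + s^2 * (cmod c)^2 * ny"
      by simp
    with minim[OF that, of t] have "0 \<le> s * (cmod c)^2 * (s * ny - 2)"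
      by (simp add: power2_eq_square algebra_simps)
    moreover have "s * (cmod c)^2 * (s * ny - 2) \<le> 0" using s0 sny
      by (intro mult_nonneg_nonpos) auto
    ultimately have "s * (cmod c)^2 * (s * ny - 2) = 0" by linarith
    then show ?thesis using s0 sny by (simp add: c_def)
  qed
  have fz0: "f z0 = f x0" using fL by (simp add: z0_def fdiff)
  have "z0 \<noteq> 0" using fz0 fx0 f0 by auto
  define nz where "nz = cinner z0 z0"
  have nz: "nz \<noteq> 0" using \<open>z0 \<noteq> 0\<close> by (simp add: nz_def cinner_self_eq_zero)
  show ?thesis
  proof (intro exI allI)
    fix x
    define y where "y = x - (f x / f z0) *\<^sub>C z0"
    have "f y = 0" using fz0 fx0 by (simp add: y_def fdiff sc)
    from orth[OF this] have "cinner z0 y = 0" by (metis cinner_commute complex_cnj_zero)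
    then have eq: "cinner z0 x = (f x / f z0) * nz"
      by (simp add: y_def cinner_diff_right cinner_scaleC_right nz_def)
    have "cinner (cnj (f z0 / nz) *\<^sub>C z0) x = (f z0 / nz) * cinner z0 x"
      by (simp add: cinner_scaleC_left)
    also have "\<dots> = f x" using eq nz fz0 fx0 by (simp add: field_simps)
    finally show "f x = cinner (cnj (f z0 / nz) *\<^sub>C z0) x" by simp
  qed
qed



lemma clinear_zero: "clinear T \<Longrightarrow> T 0 = 0"
  unfolding clinear_def by (metis add_cancel_right_right add_0)

lemma clinear_diff: "clinear T \<Longrightarrow> T (x - y) = T x - T y"
  unfolding clinear_def by (metis diff_add_cancel eq_diff_eq)

lemma bounded_pos:
  assumes "bounded_op T" shows "\<exists>K>0. \<forall>x. cnorm (T x) \<le> K * cnorm x"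
proof -
  obtain K where K: "\<forall>x. cnorm (T x) \<le> K * cnorm x" using assms by (auto simp: bounded_op_def)
  have "cnorm (T x) \<le> max K 1 * cnorm x" for x
    using K[rule_format, of x] cnorm_ge0[of x] by (meson max.cobounded1 mult_right_mono order_trans)
  then show ?thesis by (intro exI[of _ "max K 1"]) auto
qed

lemma bounded_lip:
  assumes "bounded_op T" shows "\<exists>K>0. \<forall>x y. cnorm (T x - T y) \<le> K * cnorm (x - y)"
proof -
  obtain K where "K > 0" "\<forall>x. cnorm (T x) \<le> K * cnorm x" using bounded_pos[OF assms] by blast
  moreover have "clinear T" using assms by (simp add: bounded_op_def)
  ultimately show ?thesis by (metis clinear_diff)
qed

lemma cinner_ext: "(\<And>x. cinner x u = cinner x v) \<Longrightarrow> u = (v::'a::complex_inner)"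
proof -
  assume h: "\<And>x. cinner x u = cinner x v"
  have "cinner (u - v) (u - v) = 0" using h[of "u - v"] by (simp add: cinner_diff_right)
  then show ?thesis by (simp add: cinner_self_eq_zero)
qed

lemma adjoint_exists:
  fixes T :: "'a::chilbert \<Rightarrow> 'a"
  assumes "bounded_op T"
  shows "\<forall>x y. cinner (T x) y = cinner x (adjoint T y)"
proof -
  obtain K where K: "K > 0" "\<And>x. cnorm (T x) \<le> K * cnorm x" using bounded_pos[OF assms] by blast
  have lin: "clinear T" using assms by (simp add: bounded_op_def)
  have "\<exists>z. \<forall>x. cinner (T x) y = cinner x z" for y
  proof -
    have "\<exists>z. \<forall>x. cinner y (T x) = cinner z x"
    proof (rule riesz[where C = "cnorm y * K"])
      show "cinner y (T (x1 + x2)) = cinner y (T x1) + cinner y (T x2)" for x1 x2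
        using lin by (simp add: clinear_def cinner_add_right)
      show "cinner y (T (a *\<^sub>C x)) = a * cinner y (T x)" for a x
        using lin by (simp add: clinear_def cinner_scaleC_right)
      show "cmod (cinner y (T x)) \<le> cnorm y * K * cnorm x" for x
        using cauchy_schwarz[of y "T x"] K(2)[of x] cnorm_ge0[of y]
        by (metis mult.assoc mult_left_mono order_trans)
    qed
    then obtain z where z: "\<And>x. cinner y (T x) = cinner z x" by blast
    have "cinner (T x) y = cinner x z" for x
      by (metis cinner_commute z)
    then show ?thesis by blast
  qed
  then have "\<exists>S. \<forall>y x. cinner (T x) y = cinner x (S y)" by metis
  then have "\<exists>S. \<forall>x y. cinner (T x) y = cinner x (S y)" by blast
  from someI_ex[OF this] show ?thesis unfolding adjoint_def .
qed

lemma adjoint_bounded: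
  fixes T :: "'a::chilbert \<Rightarrow> 'a"
  assumes "bounded_op T"
  shows "bounded_op (adjoint T)"
proof -
  define S where "S = adjoint T"
  have P: "\<And>x y. cinner (T x) y = cinner x (S y)" using adjoint_exists[OF assms] by (simp add: S_def)
  have lin: "clinear T" using assms by (simp add: bounded_op_def)
  obtain K where K: "K > 0" "\<And>x. cnorm (T x) \<le> K * cnorm x" using bounded_pos[OF assms] by blast
  have add: "S (y1 + y2) = S y1 + S y2" for y1 y2
    by (rule cinner_ext) (simp add: P[symmetric] cinner_add_right)
  have sc: "S (a *\<^sub>C y) = a *\<^sub>C S y" for a y
    by (rule cinner_ext) (simp add: P[symmetric] cinner_scaleC_right)
  have bd: "cnorm (S y) \<le> K * cnorm y" for y
  proof (cases "cnorm (S y) = 0")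
    case True then show ?thesis using K(1) cnorm_ge0[of y] by simp
  next
    case False
    then have pos: "cnorm (S y) > 0" using cnorm_ge0[of "S y"] by linarith
    have "(cnorm (S y))^2 = Re (cinner (T (S y)) y)" by (simp add: cnorm_sq P)
    also have "\<dots> \<le> cmod (cinner (T (S y)) y)" by (rule complex_Re_le_cmod)
    also have "\<dots> \<le> cnorm (T (S y)) * cnorm y" by (rule cauchy_schwarz)
    also have "\<dots> \<le> K * cnorm (S y) * cnorm y"
      using K(2)[of "S y"] cnorm_ge0[of y] by (rule mult_right_mono)
    finally have "cnorm (S y) * cnorm (S y) \<le> cnorm (S y) * (K * cnorm y)"
      by (simp add: power2_eq_square algebra_simps)
    then show ?thesis using pos by simp
  qed
  show ?thesis unfolding S_def[symmetric] bounded_op_def clinear_def using add sc bd by blast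
qed

lemma adjoint_zero:
  fixes T :: "'a::chilbert \<Rightarrow> 'a"
  assumes "bounded_op T" shows "adjoint T 0 = 0"
  using adjoint_bounded[OF assms] clinear_zero by (auto simp: bounded_op_def)

lemma cinner_pair[simp]: "cinner (a, b) (c, d) = cinner a c + cinner b d"
  by (simp add: cinner_prod_def)

lemma scaleC_pair[simp]: "r *\<^sub>C (a, b) = (r *\<^sub>C a, r *\<^sub>C b)"
  by (simp add: scaleC_prod_def)

lemma cnorm_pair_sq: "(cnorm (a, b))^2 = (cnorm a)^2 + (cnorm b)^2"
  by (simp add: cnorm_sq)

lemma cnorm_fst_le: "cnorm a \<le> cnorm (a, b)"
  using cnorm_pair_sq[of a b] by (metis cnorm_ge0 le_add_same_cancel1 power2_le_imp_le zero_le_power2)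

lemma cnorm_snd_le: "cnorm b \<le> cnorm (a, b)"
  using cnorm_pair_sq[of a b] by (metis cnorm_ge0 le_add_same_cancel2 power2_le_imp_le zero_le_power2)

lemma cnorm_pair_0: "cnorm (a, 0) = cnorm a"
  by (simp add: cnorm_def)

lemma dsum_lip:
  fixes A :: "'a::complex_inner \<Rightarrow> 'a" and B :: "'b::complex_inner \<Rightarrow> 'b"
  assumes "bounded_op A" "bounded_op B"
  shows "\<exists>K>0. \<forall>p q. cnorm (dsum_op A B p - dsum_op A B q) \<le> K * cnorm (p - q)"
proof -
  obtain KA where KA: "KA > 0" "\<And>x. cnorm (A x) \<le> KA * cnorm x" using bounded_pos[OF assms(1)] by blast
  obtain KB where KB: "KB > 0" "\<And>x. cnorm (B x) \<le> KB * cnorm x" using bounded_pos[OF assms(2)] by blast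
  have lA: "clinear A" and lB: "clinear B" using assms by (auto simp: bounded_op_def)
  define K where "K = max KA KB"
  have K0: "K > 0" using KA by (simp add: K_def)
  have "cnorm (dsum_op A B p - dsum_op A B q) \<le> K * cnorm (p - q)" for p q
  proof -
    obtain a b where p: "p = (a, b)" by fastforce
    obtain c d where q: "q = (c, d)" by fastforce
    have eq: "dsum_op A B p - dsum_op A B q = (A (a - c), B (b - d))"
      using lA lB by (simp add: p q dsum_op_def clinear_diff)
    have 1: "cnorm (A (a - c)) \<le> K * cnorm (a - c)"
      using KA(2)[of "a - c"] cnorm_ge0[of "a - c"] unfolding K_def
      by (meson max.cobounded1 mult_right_mono order_trans)
    have 2: "cnorm (B (b - d)) \<le> K * cnorm (b - d)"
      using KB(2)[of "b - d"] cnorm_ge0[of "b - d"] unfolding K_def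
      by (meson max.cobounded2 mult_right_mono order_trans)
    have "(cnorm (A (a - c), B (b - d)))^2 = (cnorm (A (a - c)))^2 + (cnorm (B (b - d)))^2"
      by (rule cnorm_pair_sq)
    also have "\<dots> \<le> (K * cnorm (a - c))^2 + (K * cnorm (b - d))^2"
      using 1 2 cnorm_ge0[of "A (a - c)"] cnorm_ge0[of "B (b - d)"] by (intro add_mono power_mono) auto
    also have "\<dots> = (K * cnorm (p - q))^2"
      using cnorm_pair_sq[of "a - c" "b - d"] by (simp add: p q power_mult_distrib algebra_simps)
    finally show ?thesis unfolding eq using K0 cnorm_ge0[of "p - q"]
      by (meson mult_nonneg_nonneg less_imp_le power2_le_imp_le)
  qed
  then show ?thesis using K0 by blast
qed



definition gq :: "complex set" where
  "gq = (\<lambda>(r, s). Complex (of_rat r) (of_rat s)) ` UNIV"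

lemma countable_gq: "countable gq"
  unfolding gq_def by simp

lemma real_rat_near: "(e::real) > 0 \<Longrightarrow> \<exists>r::rat. \<bar>(x::real) - of_rat r\<bar> < e"
proof -
  assume e: "e > 0"
  obtain q where q: "q \<in> \<rat>" "x - e < q" "q < x" using Rats_dense_in_real[of "x - e" x] e by auto
  from q(1) obtain r where "q = of_rat r" by (auto elim: Rats_cases)
  with q show ?thesis by (intro exI[of _ r]) auto
qed

lemma gq_dense: "e > 0 \<Longrightarrow> \<exists>q\<in>gq. cmod (a - q) < e"
proof -
  assume e: "e > 0"
  obtain r where r: "\<bar>Re a - of_rat r\<bar> < e/2" using real_rat_near[of "e/2" "Re a"] e by auto
  obtain s where s: "\<bar>Im a - of_rat s\<bar> < e/2" using real_rat_near[of "e/2" "Im a"] e by auto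
  have "cmod (a - Complex (of_rat r) (of_rat s)) \<le> \<bar>Re a - of_rat r\<bar> + \<bar>Im a - of_rat s\<bar>"
    using cmod_le[of "a - Complex (of_rat r) (of_rat s)"] by simp
  also have "\<dots> < e" using r s by simp
  finally show ?thesis unfolding gq_def by (intro bexI[of _ "Complex (of_rat r) (of_rat s)"]) auto
qed

lemma closure_construction:
  fixes G0 :: "'a::complex_inner set" and F :: "('a \<Rightarrow> 'a) set"
  assumes cG0: "countable G0" and cF: "countable F"
    and lipF: "\<And>f. f \<in> F \<Longrightarrow> \<exists>K>0. \<forall>x y. cnorm (f x - f y) \<le> K * cnorm (x - y)"
  shows "\<exists>N. csubspace N \<and> cclosed N \<and> (\<forall>f\<in>F. f ` N \<subseteq> N) \<and> cseparable N
            \<and> (\<forall>x. (\<forall>e>0. \<exists>g\<in>G0. cnorm (x - g) < e) \<longrightarrow> x \<in> N)"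
proof -
  define step where "step S = S \<union> (\<Union>f\<in>F. f ` S) \<union> (\<lambda>(x, y). x + y) ` (S \<times> S)
      \<union> (\<lambda>(q, x). q *\<^sub>C x) ` (gq \<times> S)" for S :: "'a set"
  define lev where "lev n = (step ^^ n) (insert 0 G0)" for n
  define G where "G = (\<Union>n. lev n)"
  have cstep: "countable S \<Longrightarrow> countable (step S)" for S
    unfolding step_def using cF countable_gq by auto
  have clev: "countable (lev n)" for n
    by (induction n) (auto simp: lev_def cG0 cstep)
  have levSuc: "lev (Suc n) = step (lev n)" for n by (simp add: lev_def)
  have levmono1: "lev n \<subseteq> lev (Suc n)" for n by (auto simp: levSuc step_def)
  have levmono: "m \<le> n \<Longrightarrow> lev m \<subseteq> lev n" for m n
    by (rule lift_Suc_mono_le[of lev, OF levmono1])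
  have cG: "countable G" unfolding G_def using clev by auto
  have G0G: "insert 0 G0 \<subseteq> G" unfolding G_def using lev_def by (metis UNIV_I UN_upper funpow_0)
  have Gf: "f \<in> F \<Longrightarrow> x \<in> G \<Longrightarrow> f x \<in> G" for f x
  proof -
    assume "f \<in> F" "x \<in> G"
    then obtain n where "x \<in> lev n" by (auto simp: G_def)
    then have "f x \<in> lev (Suc n)" using \<open>f \<in> F\<close> by (auto simp: levSuc step_def)
    then show ?thesis by (auto simp: G_def)
  qed
  have Gadd: "x \<in> G \<Longrightarrow> y \<in> G \<Longrightarrow> x + y \<in> G" for x y
  proof -
    assume "x \<in> G" "y \<in> G"
    then obtain n m where "x \<in> lev n" "y \<in> lev m" by (auto simp: G_def)
    then have "x \<in> lev (max n m)" "y \<in> lev (max n m)"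
      using levmono[of n "max n m"] levmono[of m "max n m"] by auto
    then have "x + y \<in> lev (Suc (max n m))" unfolding levSuc step_def by blast
    then show ?thesis by (auto simp: G_def)
  qed
  have Gsc: "q \<in> gq \<Longrightarrow> x \<in> G \<Longrightarrow> q *\<^sub>C x \<in> G" for q x
  proof -
    assume "q \<in> gq" "x \<in> G"
    then obtain n where "x \<in> lev n" by (auto simp: G_def)
    then have "q *\<^sub>C x \<in> lev (Suc n)" using \<open>q \<in> gq\<close> unfolding levSuc step_def by blast
    then show ?thesis by (auto simp: G_def)
  qed
  define N where "N = {x. \<forall>e>0. \<exists>g\<in>G. cnorm (x - g) < e}"
  have GN: "G \<subseteq> N" unfolding N_def
  proof (intro subsetI CollectI allI impI)
    fix x e assume "x \<in> G" "(e::real) > 0"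
    then show "\<exists>g\<in>G. cnorm (x - g) < e" by (intro bexI[of _ x]) auto
  qed
  have Nf: "f \<in> F \<Longrightarrow> x \<in> N \<Longrightarrow> f x \<in> N" for f x
  proof -
    assume f: "f \<in> F" and x: "x \<in> N"
    obtain K where K: "K > 0" "\<And>x y. cnorm (f x - f y) \<le> K * cnorm (x - y)" using lipF[OF f] by blast
    show "f x \<in> N" unfolding N_def
    proof (intro CollectI allI impI)
      fix e :: real assume e: "e > 0"
      have "e / K > 0" using e K(1) by simp
      then obtain g where g: "g \<in> G" "cnorm (x - g) < e / K" using x unfolding N_def by blast
      have "cnorm (f x - f g) \<le> K * cnorm (x - g)" by (rule K(2))
      also have "\<dots> < K * (e / K)" using g(2) K(1) by (rule mult_strict_left_mono)
      also have "\<dots> = e" using K(1) by simp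
      finally show "\<exists>g\<in>G. cnorm (f x - g) < e" using Gf[OF f g(1)] by blast
    qed
  qed
  have Nadd: "x \<in> N \<Longrightarrow> y \<in> N \<Longrightarrow> x + y \<in> N" for x y
  proof -
    assume x: "x \<in> N" and y: "y \<in> N"
    show "x + y \<in> N" unfolding N_def
    proof (intro CollectI allI impI)
      fix e :: real assume e: "e > 0"
      have e2: "e / 2 > 0" using e by simp
      obtain g where g: "g \<in> G" "cnorm (x - g) < e / 2" using x e2 unfolding N_def by blast
      obtain h where h: "h \<in> G" "cnorm (y - h) < e / 2" using y e2 unfolding N_def by blast
      have "cnorm ((x + y) - (g + h)) = cnorm ((x - g) + (y - h))" by (simp add: algebra_simps)
      also have "\<dots> \<le> cnorm (x - g) + cnorm (y - h)" by (rule cnorm_triangle)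
      also have "\<dots> < e" using g h by simp
      finally show "\<exists>g\<in>G. cnorm (x + y - g) < e" using Gadd[OF g(1) h(1)] by blast
    qed
  qed
  have Nsc: "x \<in> N \<Longrightarrow> a *\<^sub>C x \<in> N" for a x
  proof -
    assume x: "x \<in> N"
    show "a *\<^sub>C x \<in> N" unfolding N_def
    proof (intro CollectI allI impI)
      fix e :: real assume e: "e > 0"
      define e1 where "e1 = min 1 (e / (2 * (cnorm x + 1)))"
      have "e / (2 * (cnorm x + 1)) > 0" using e cnorm_ge0[of x] by (intro divide_pos_pos) auto
      then have e1: "e1 > 0" by (simp add: e1_def)
      obtain q where q: "q \<in> gq" "cmod (a - q) < e1" using gq_dense[OF e1] by blast
      have qa: "cmod q \<le> cmod a + 1"
        using q(2) norm_triangle_ineq2[of q a] norm_minus_commute[of a q] unfolding e1_def by linarith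
      have ap: "0 < 2 * (cmod a + 1)" by (simp add: add_nonneg_pos)
      have ap1: "0 < cmod a + 1" by (simp add: add_nonneg_pos)
      have e2: "e / (2 * (cmod a + 1)) > 0" using e ap by (rule divide_pos_pos)
      obtain g where g: "g \<in> G" "cnorm (x - g) < e / (2 * (cmod a + 1))" using x e2 unfolding N_def by blast
      have "a *\<^sub>C x - q *\<^sub>C g = (a - q) *\<^sub>C x + q *\<^sub>C (x - g)"
        by (simp add: scaleC_diff_left scaleC_diff_right)
      then have "cnorm (a *\<^sub>C x - q *\<^sub>C g) \<le> cmod (a - q) * cnorm x + cmod q * cnorm (x - g)"
        using cnorm_triangle[of "(a - q) *\<^sub>C x" "q *\<^sub>C (x - g)"] by (simp add: cnorm_scaleC)
      also have "cmod (a - q) * cnorm x \<le> e / (2 * (cnorm x + 1)) * cnorm x"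
        using q(2) cnorm_ge0[of x] unfolding e1_def by (intro mult_right_mono) auto
      also have "e / (2 * (cnorm x + 1)) * cnorm x < e / 2"
        using e cnorm_ge0[of x] by (simp add: field_simps)
      also have "cmod q * cnorm (x - g) \<le> (cmod a + 1) * cnorm (x - g)"
        using qa cnorm_ge0[of "x - g"] by (rule mult_right_mono)
      also have "(cmod a + 1) * cnorm (x - g) < (cmod a + 1) * (e / (2 * (cmod a + 1)))"
        using g(2) ap1 by (rule mult_strict_left_mono)
      also have "(cmod a + 1) * (e / (2 * (cmod a + 1))) = e / 2"
        using ap1 by (simp add: field_simps)
      finally have "cnorm (a *\<^sub>C x - q *\<^sub>C g) < e" by simp
      then show "\<exists>g\<in>G. cnorm (a *\<^sub>C x - g) < e" using Gsc[OF q(1) g(1)] by blast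
    qed
  qed
  have N0: "0 \<in> N" using G0G GN by auto
  have Nclosed: "cclosed N" unfolding cclosed_def
  proof (intro allI impI)
    fix X L assume h: "(\<forall>n. X n \<in> N) \<and> (\<lambda>n. cnorm (X n - L)) \<longlonglongrightarrow> 0"
    show "L \<in> N" unfolding N_def
    proof (intro CollectI allI impI)
      fix e :: real assume e: "e > 0"
      have "\<forall>\<^sub>F n in sequentially. cnorm (X n - L) < e / 2"
        using h e by (intro order_tendstoD(2)) auto
      then obtain n where n: "cnorm (X n - L) < e / 2" by (auto simp: eventually_sequentially)
      have e2: "e / 2 > 0" using e by simp
      obtain g where g: "g \<in> G" "cnorm (X n - g) < e / 2" using h e2 unfolding N_def by blast
      have "cnorm (L - g) \<le> cnorm (L - X n) + cnorm (X n - g)" by (rule cnorm_triangle_diff)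
      also have "\<dots> < e" using n g(2) by (simp add: cnorm_diff_commute[of L])
      finally show "\<exists>g\<in>G. cnorm (L - g) < e" using g(1) by blast
    qed
  qed
  have "csubspace N" unfolding csubspace_def using N0 Nadd Nsc by blast
  moreover have "cseparable N" unfolding cseparable_def using cG GN by (auto simp: N_def)
  moreover have "\<forall>x. (\<forall>e>0. \<exists>g\<in>G0. cnorm (x - g) < e) \<longrightarrow> x \<in> N"
    using G0G unfolding N_def by blast
  ultimately show ?thesis using Nclosed Nf by blast
qed



lemma cnorm_0_pair: "cnorm (0, b) = cnorm b"
  by (simp add: cnorm_def)

theorem lemma3p2:
  fixes T1 T3 :: "'h::chilbert \<Rightarrow> 'h"
    and T2 T4 :: "'k::chilbert \<Rightarrow> 'k"
  assumes "cseparable (UNIV :: 'h set)"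
    and "infinite_dimensional TYPE('h)"
    and "bounded_op T1" and "bounded_op T3"
    and "bounded_op T2" and "bounded_op T4"
    and "unitarily_equiv_on (UNIV :: ('h \<times> 'k) set) (dsum_op T1 T2)
                            (UNIV :: ('h \<times> 'k) set) (dsum_op T3 T4)"
  shows "\<exists>M :: 'k set. closed_csubspace M \<and> cseparable M
            \<and> reducing M T2 \<and> reducing M T4
            \<and> unitarily_equiv_on (UNIV \<times> M) (dsum_op T1 T2) (UNIV \<times> M) (dsum_op T3 T4)"
proof -
  obtain W :: "'h \<times> 'k \<Rightarrow> 'h \<times> 'k" where
    Wbij: "bij_betw W UNIV UNIV" and
    Wadd: "\<And>x y. W (x + y) = W x + W y" and
    Wsc: "\<And>a x. W (a *\<^sub>C x) = a *\<^sub>C W x" and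
    Winn: "\<And>x y. cinner (W x) (W y) = cinner x y" and
    Wint: "\<And>x. dsum_op T3 T4 (W x) = W (dsum_op T1 T2 x)"
    using assms(7) unfolding unitarily_equiv_on_def by blast
  define Wi where "Wi = inv W"
  have WWi: "W (Wi x) = x" for x using Wbij by (simp add: Wi_def bij_betw_def surj_f_inv_f)
  have Wdiff: "W (x - y) = W x - W y" for x y
    using Wadd[of "x - y" y] by (simp add: eq_diff_eq)
  have Wiso: "cnorm (W x - W y) = cnorm (x - y)" for x y
    by (simp add: Wdiff[symmetric] cnorm_def Winn)
  have Wilip: "cnorm (Wi x - Wi y) = cnorm (x - y)" for x y
    using Wiso[of "Wi x" "Wi y"] by (simp add: WWi)
  obtain D0 :: "'h set" where D0: "countable D0" "\<And>x e. e > 0 \<Longrightarrow> \<exists>d\<in>D0. cnorm (x - d) < e"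
    using assms(1) unfolding cseparable_def by blast
  define G0 where "G0 = (\<lambda>d. (d, 0::'k)) ` D0"
  define F where "F = {dsum_op T1 T2, dsum_op (adjoint T1) (adjoint T2),
                       dsum_op T3 T4, dsum_op (adjoint T3) (adjoint T4), W, Wi}"
  have cF: "countable F" unfolding F_def by simp
  have lipF: "\<exists>K>0. \<forall>x y. cnorm (f x - f y) \<le> K * cnorm (x - y)" if "f \<in> F" for f
  proof -
    have "\<exists>K>0. \<forall>x y. cnorm (W x - W y) \<le> K * cnorm (x - y)"
      by (intro exI[of _ 1]) (simp add: Wiso)
    moreover have "\<exists>K>0. \<forall>x y. cnorm (Wi x - Wi y) \<le> K * cnorm (x - y)"
      by (intro exI[of _ 1]) (simp add: Wilip)
    ultimately show ?thesis using that unfolding F_def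
      using dsum_lip[OF assms(3) assms(5)] dsum_lip[OF assms(4) assms(6)]
        dsum_lip[OF adjoint_bounded[OF assms(3)] adjoint_bounded[OF assms(5)]]
        dsum_lip[OF adjoint_bounded[OF assms(4)] adjoint_bounded[OF assms(6)]]
      by blast
  qed
  obtain N where Nsub: "csubspace N" and Ncl: "cclosed N" and NF: "\<forall>f\<in>F. f ` N \<subseteq> N"
    and Nsep: "cseparable N" and Nclo: "\<forall>x. (\<forall>e>0. \<exists>g\<in>G0. cnorm (x - g) < e) \<longrightarrow> x \<in> N"
    using closure_construction[of G0 F] D0(1) cF lipF unfolding G0_def by blast
  have Nadd: "x \<in> N \<Longrightarrow> y \<in> N \<Longrightarrow> x + y \<in> N" for x y using Nsub by (simp add: csubspace_def)
  have Nsc: "x \<in> N \<Longrightarrow> a *\<^sub>C x \<in> N" for a x using Nsub by (simp add: csubspace_def)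
  have Ndiff: "x \<in> N \<Longrightarrow> y \<in> N \<Longrightarrow> x - y \<in> N" for x y
    using Nadd[of x "(-1) *\<^sub>C y"] Nsc[of y "-1"] by (simp add: scaleC_minus_left scaleC_one)
  have N0: "0 \<in> N" using Nsub by (simp add: csubspace_def)
  have Nf: "f \<in> F \<Longrightarrow> x \<in> N \<Longrightarrow> f x \<in> N" for f x using NF by blast
  have H0: "(h, 0) \<in> N" for h
  proof -
    have "\<exists>g\<in>G0. cnorm ((h, 0) - g) < e" if e0: "e > 0" for e
    proof -
      obtain d where "d \<in> D0" "cnorm (h - d) < e" using D0(2)[OF e0] by blast
      then show ?thesis unfolding G0_def by (intro bexI[of _ "(d, 0)"]) (auto simp: cnorm_pair_0)
    qed
    then show ?thesis using Nclo by blast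
  qed
  define M where "M = {k. (0, k) \<in> N}"
  have NM: "N = UNIV \<times> M"
  proof (intro set_eqI iffI)
    fix p :: "'h \<times> 'k" assume "p \<in> N"
    obtain h k where p: "p = (h, k)" by fastforce
    have "(h, k) - (h, 0) \<in> N" using Ndiff \<open>p \<in> N\<close> H0 p by blast
    then show "p \<in> UNIV \<times> M" by (simp add: p M_def)
  next
    fix p :: "'h \<times> 'k" assume "p \<in> UNIV \<times> M"
    obtain h k where p: "p = (h, k)" by fastforce
    have "(0, k) \<in> N" using \<open>p \<in> UNIV \<times> M\<close> p by (auto simp: M_def)
    then have "(h, 0) + (0, k) \<in> N" using Nadd H0 by blast
    then show "p \<in> N" by (simp add: p)
  qed
  have Mcl: "closed_csubspace M"
  proof -
    have "0 \<in> M" using N0 by (simp add: M_def zero_prod_def)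
    moreover have "x + y \<in> M" if "x \<in> M" "y \<in> M" for x y
      using Nadd[of "(0, x)" "(0, y)"] that by (simp add: M_def)
    moreover have "a *\<^sub>C x \<in> M" if "x \<in> M" for a x
      using Nsc[of "(0, x)" a] that by (simp add: M_def)
    moreover have "cclosed M" unfolding cclosed_def
    proof (intro allI impI)
      fix X L assume h: "(\<forall>n. X n \<in> M) \<and> (\<lambda>n. cnorm (X n - L)) \<longlonglongrightarrow> 0"
      have h': "(\<forall>n. (0, X n) \<in> N) \<and> (\<lambda>n. cnorm ((0::'h, X n) - (0, L))) \<longlonglongrightarrow> 0"
        using h by (simp add: M_def cnorm_0_pair)
      have cl: "\<And>X L. (\<forall>n. X n \<in> N) \<and> (\<lambda>n. cnorm (X n - L)) \<longlonglongrightarrow> 0 \<Longrightarrow> L \<in> N"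
        using Ncl unfolding cclosed_def by blast
      from h' have "(0, L) \<in> N" by (rule cl)
      then show "L \<in> M" by (simp add: M_def)
    qed
    ultimately show ?thesis unfolding closed_csubspace_def csubspace_def by blast
  qed
  have Msep: "cseparable M"
  proof -
    obtain D' where D': "countable D'" "D' \<subseteq> N" "\<And>x e. x \<in> N \<Longrightarrow> e > 0 \<Longrightarrow> \<exists>d\<in>D'. cnorm (x - d) < e"
      using Nsep unfolding cseparable_def by blast
    have "snd ` D' \<subseteq> M" using D'(2) NM by auto
    moreover have "\<exists>d\<in>snd ` D'. cnorm (k - d) < e" if ke: "k \<in> M" "e > 0" for k e
    proof -
      obtain d where d: "d \<in> D'" "cnorm ((0, k) - d) < e" using D'(3)[of "(0, k)" e] ke by (auto simp: M_def)
      have "cnorm (k - snd d) \<le> cnorm ((0, k) - d)"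
        using cnorm_snd_le[where a="0 - fst d" and b="k - snd d"] by (cases d) simp
      then show ?thesis using d by force
    qed
    ultimately show ?thesis unfolding cseparable_def
      by (intro exI[of _ "snd ` D'"] conjI countable_image[OF D'(1)]) auto
  qed
  have T10: "T1 0 = 0" and T30: "T3 0 = 0" using assms(3,4) clinear_zero by (auto simp: bounded_op_def)
  have A10: "adjoint T1 0 = 0" and A30: "adjoint T3 0 = 0" using adjoint_zero assms(3,4) by auto
  have red2: "reducing M T2"
  proof -
    have "T2 k \<in> M" if "k \<in> M" for k
      using Nf[of "dsum_op T1 T2" "(0, k)"] that by (simp add: F_def M_def dsum_op_def T10)
    moreover have "adjoint T2 k \<in> M" if "k \<in> M" for k
      using Nf[of "dsum_op (adjoint T1) (adjoint T2)" "(0, k)"] that by (simp add: F_def M_def dsum_op_def A10)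
    ultimately show ?thesis using Mcl unfolding reducing_def by blast
  qed
  have red4: "reducing M T4"
  proof -
    have "T4 k \<in> M" if "k \<in> M" for k
      using Nf[of "dsum_op T3 T4" "(0, k)"] that by (simp add: F_def M_def dsum_op_def T30)
    moreover have "adjoint T4 k \<in> M" if "k \<in> M" for k
      using Nf[of "dsum_op (adjoint T3) (adjoint T4)" "(0, k)"] that by (simp add: F_def M_def dsum_op_def A30)
    ultimately show ?thesis using Mcl unfolding reducing_def by blast
  qed
  have ue: "unitarily_equiv_on N (dsum_op T1 T2) N (dsum_op T3 T4)"
    unfolding unitarily_equiv_on_def
  proof (intro exI[of _ W] conjI ballI allI)
    have "W ` N = N"
    proof
      show "W ` N \<subseteq> N" using Nf[of W] by (auto simp: F_def)
      show "N \<subseteq> W ` N"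
      proof
        fix x assume "x \<in> N"
        then have "Wi x \<in> N" using Nf[of Wi] by (auto simp: F_def)
        then show "x \<in> W ` N" using WWi[of x] by (metis image_eqI)
      qed
    qed
    moreover have "inj_on W N" using Wbij by (auto simp: bij_betw_def inj_on_def)
    ultimately show "bij_betw W N N" by (simp add: bij_betw_def)
  qed (auto simp: Wadd Wsc Winn Wint)
  show ?thesis using Mcl Msep red2 red4 ue NM by auto
qed

end
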